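(* For every $k\ge1$, $S^{(k)}_{-1}=0$ (and hence also the $\eta^{1}$-coefficient of $S^{(k)}_{\rm odd}$ vanishes).
   Context: Let $\eta$ be a large parameter, $c\neq0$. $(H_{\rm II})$: $\frac{d\lambda}{dt}=\eta\nu$, $\frac{d\nu}{dt}=\eta(2\lambda^3+t\lambda+c)$. Let $\lambda_0$ be a branch of $2\lambda_0^3+t\lambda_0+c=0$, $\Delta=6\lambda_0^2+t$, $\tau_1$ a zero of $\Delta$, $\phi_{\rm II}=\int_{\tau_1}^t\sqrt\Delta\,dt$. A 1-parameter solution of $(H_{\rm II})$ is a formal transseries $\lambda=\sum_{k\ge0}(\alpha\eta^{-1/2})^k\lambda^{(k)}(t,c,\eta)e^{k\eta\phi_{\rm II}}$, $\nu=\eta^{-1}\frac{d\lambda}{dt}=\sum_{k\ge0}(\alpha\eta^{-1/2})^k\nu^{(k)}e^{k\eta\phi_{\rm II}}$, with $\alpha$ a free parameter, $\lambda^{(k)},\nu^{(k)}$ formal power series in $\eta^{-1}$, $(\lambda^{(0)},\nu^{(0)})$ the 0-parameter solution (formal power series solution with leading terms $\lambda_0$, $0$), solving $(H_{\rm II})$ formally. Substitute it into $Q_{\rm II}=x^4+tx^2+2cx+2K_{\rm II}-\eta^{-1}\frac{\nu}{x-\lambda}+\eta^{-2}\frac{3}{4(x-\lambda)^2}$, $K_{\rm II}=\frac12[\nu^2-(\lambda^4+t\lambda^2+2c\lambda)]$, and $A_{\rm II}=\frac{1}{2(x-\lambda)}$, expanded as formal series $Q_{\rm II}=\sum_k(\alpha\eta^{-1/2})^kQ^{(k)}_{\rm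 II}e^{k\eta\phi_{\rm II}}$, $Q^{(k)}_{\rm II}=\sum_{\ell\ge0}\eta^{-\ell}Q^{(k)}_\ell(x,t,c)$ (similarly $A_{\rm II}$). The leading term is $Q_0=Q^{(0)}_0=(x-\lambda_0)^2(x^2+2\lambda_0x+3\lambda_0^2+t)$; let $S_{-1}=\sqrt{Q_0}$ with $S_{-1}\sim x^2$ at $\infty$. Let $S=\sum_{k\ge0}(\alpha\eta^{-1/2})^kS^{(k)}e^{k\eta\phi_{\rm II}}$, $S^{(k)}=\sum_{\ell\ge-1}\eta^{-\ell}S^{(k)}_\ell(x,t,c)$, be the formal solution of the Riccati equation $S^2+\partial_xS=\eta^2Q_{\rm II}$ with $S^{(0)}_{-1}=S_{-1}$, all coefficients being determined recursively by $2S_{-1}S^{(k)}_{\ell+1}+\sum_{k_1+k_2=k,\ell_1+\ell_2=\ell,0\le k_j<k\text{ or }\dots}S^{(k_1)}_{\ell_1}S^{(k_2)}_{\ell_2}+\partial_xS^{(k)}_\ell=Q^{(k)}_{\ell+2}$ (the sum over all pairs other than those involving $S_{-1}S^{(k)}_{\ell+1}$). $S^\dagger$ is the analogous solution with $S^{\dagger(0)}_{-1}=-S_{-1}$ and $S_{\rm odd}=\frac12(S-S^\dagger)$. One has the compatibility relation $\partial_tS=\partial_x(A_{\rm II}S-\frac12\partial_xA_{\rm II})$, which holds because $(\lambda,\nu)$ solves $(H_{\rm II})$. *)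

theory Defs
  imports "HOL-Analysis.Analysis" "HOL-Computational_Algebra.Formal_Power_Series"
begin

(* An element of complex fps fps encodes
     sum_{k,l} F_{k,l} (alpha eta^(-1/2) e^(eta phi))^k eta^(-l);
   outer index k = transseries grade, inner index l = power of eta^(-1).
   Multiplication of fps fps is exactly the formal product of such transseries
   (grades add), and inverse gives the formal inverse when the (0,0) coefficient
   is nonzero. *)

definition bser :: "(nat \<Rightarrow> nat \<Rightarrow> complex) \<Rightarrow> complex fps fps" where
  "bser f = Abs_fps (\<lambda>k. Abs_fps (\<lambda>l. f k l))"

definition bcoef :: "complex fps fps \<Rightarrow> nat \<Rightarrow> nat \<Rightarrow> complex" where
  "bcoef F k l = fps_nth (fps_nth F k) l"

definition bconst :: "complex \<Rightarrow> complex fps fps" where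
  "bconst z = fps_const (fps_const z)"

definition etainv :: "complex fps fps" where
  "etainv = fps_const fps_X"

(* Coefficients of eta^(-1) d/dt applied to sum_{k,l} f k l t (alpha eta^(-1/2))^k eta^(-l) e^(k eta phi):
   (eta^(-1) d/dt f)_{k,l} = d/dt f_{k,l-1} + k phi'(t) f_{k,l}. *)
definition edt :: "(complex \<Rightarrow> complex) \<Rightarrow> (nat \<Rightarrow> nat \<Rightarrow> complex \<Rightarrow> complex)
                    \<Rightarrow> nat \<Rightarrow> nat \<Rightarrow> complex \<Rightarrow> complex" where
  "edt phi f k l t = (if l = 0 then 0 else deriv (f k (l - 1)) t) + of_nat k * deriv phi t * f k l t"

(* lambda and nu = eta^(-1) d lambda/dt as bigraded series at the point t *)
definition LamS :: "(nat \<Rightarrow> nat \<Rightarrow> complex \<Rightarrow> complex) \<Rightarrow> complex \<Rightarrow> complex fps fps" where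
  "LamS lam t = bser (\<lambda>k l. lam k l t)"

definition NuS :: "(complex \<Rightarrow> complex) \<Rightarrow> (nat \<Rightarrow> nat \<Rightarrow> complex \<Rightarrow> complex) \<Rightarrow> complex \<Rightarrow> complex fps fps" where
  "NuS phi lam t = bser (\<lambda>k l. edt phi lam k l t)"

definition KS :: "complex \<Rightarrow> (complex \<Rightarrow> complex) \<Rightarrow> (nat \<Rightarrow> nat \<Rightarrow> complex \<Rightarrow> complex) \<Rightarrow> complex \<Rightarrow> complex fps fps" where
  "KS c phi lam t = bconst (1/2) * ((NuS phi lam t)^2
      - ((LamS lam t)^4 + bconst t * (LamS lam t)^2 + bconst (2*c) * LamS lam t))"

definition QS :: "complex \<Rightarrow> (complex \<Rightarrow> complex) \<Rightarrow> (nat \<Rightarrow> nat \<Rightarrow> complex \<Rightarrow> complex)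
                  \<Rightarrow> complex \<Rightarrow> complex \<Rightarrow> complex fps fps" where
  "QS c phi lam x t =
     bconst (x^4 + t*x^2 + 2*c*x) + 2 * KS c phi lam t
     - etainv * NuS phi lam t * inverse (bconst x - LamS lam t)
     + etainv^2 * bconst (3/4) * (inverse (bconst x - LamS lam t))^2"

(* 1-parameter solution of (H_II): lam k l t is the coefficient of eta^(-l) in lambda^(k)(t,c,eta),
   holomorphic on the t-domain U, with lambda^(0)_0 = lambda_0, and
   nu = eta^(-1) d lambda/dt,  eta^(-1) d nu/dt = 2 lambda^3 + t lambda + c  formally. *)
definition one_param_solution ::
  "complex \<Rightarrow> (complex \<Rightarrow> complex) \<Rightarrow> (complex \<Rightarrow> complex) \<Rightarrow> complex set
     \<Rightarrow> (nat \<Rightarrow> nat \<Rightarrow> complex \<Rightarrow> complex) \<Rightarrow> bool" where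
  "one_param_solution c lam0 phi U lam \<longleftrightarrow>
     (\<forall>k l. lam k l holomorphic_on U) \<and>
     (\<forall>t\<in>U. lam 0 0 t = lam0 t) \<and>
     (\<forall>k l. \<forall>t\<in>U. edt phi (edt phi lam) k l t
         = bcoef (2 * (LamS lam t)^3 + bconst t * LamS lam t + bconst c) k l)"

(* Formal Riccati equation S^2 + d/dx S = eta^2 Q_II, coefficientwise.
   S k m x t is S^(k)_(m-1)(x,t,c), i.e. S^(k) = sum_{m>=0} eta^(1-m) S k m. *)
definition riccati_sol ::
  "complex \<Rightarrow> (complex \<Rightarrow> complex) \<Rightarrow> (nat \<Rightarrow> nat \<Rightarrow> complex \<Rightarrow> complex)
     \<Rightarrow> complex set \<Rightarrow> (complex \<Rightarrow> complex set)
     \<Rightarrow> (nat \<Rightarrow> nat \<Rightarrow> complex \<Rightarrow> complex \<Rightarrow> complex) \<Rightarrow> bool" where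
  "riccati_sol c phi lam U X S \<longleftrightarrow>
     (\<forall>t\<in>U. \<forall>k m. (\<lambda>x. S k m x t) holomorphic_on X t) \<and>
     (\<forall>t\<in>U. \<forall>x\<in>X t. \<forall>k m.
        bcoef (bser (\<lambda>i j. S i j x t) * bser (\<lambda>i j. S i j x t)) k m
        + (if m = 0 then 0 else deriv (\<lambda>y. S k (m - 1) y t) x)
        = bcoef (QS c phi lam x t) k m)"

end

theory Submission
  imports Defs
begin

definition P :: "complex fps fps \<Rightarrow> complex fps" where
  "P F = Abs_fps (\<lambda>k. fps_nth (fps_nth F k) 0)"
lemma P_nth: "fps_nth (P F) k = bcoef F k 0" by (simp add: P_def bcoef_def)
lemma P_mult: "P (F*G) = P F * P G"
  by (rule fps_ext) (simp add: P_def fps_mult_nth fps_sum_nth)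
lemma P_add: "P (F+G) = P F + P G" by (rule fps_ext) (simp add: P_def)
lemma P_diff: "P (F-G) = P F - P G" by (rule fps_ext) (simp add: P_def)
lemma P_one: "P 1 = 1" by (rule fps_ext) (simp add: P_def)
lemma P_pow: "P (F^n) = P F ^ n" by (induct n) (simp_all add: P_one P_mult)
lemma P_bconst: "P (bconst z) = fps_const z" by (rule fps_ext) (simp add: P_def bconst_def)
lemma P_two: "P 2 = 2" by (rule fps_ext) (simp add: P_def fps_numeral_nth)
lemma P_etainv: "P etainv = 0" by (rule fps_ext) (simp add: P_def etainv_def)
lemma P_bser: "P (bser f) = Abs_fps (\<lambda>k. f k 0)" by (simp add: P_def bser_def)
lemma K_const:
  fixes L :: "complex fps"
  assumes ode: "fps_const (a^2) * (fps_X * fps_deriv (fps_X * fps_deriv L))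
     = 2 * L^3 + fps_const t * L + fps_const c"
  shows "fps_deriv (fps_const (1/2) * ((fps_const a * (fps_X * fps_deriv L))^2
      - (L^4 + fps_const t * L^2 + fps_const (2*c) * L))) = 0"
proof -
  define D where "D = fps_deriv L"
  define M where "M = fps_X * D"
  define M' where "M' = fps_deriv M"
  have e1: "fps_deriv ((fps_const a * M)^2) = 2 * (fps_const a * M) * (fps_const a * M')"
    by (simp add: fps_deriv_power M'_def)
  have e2: "fps_deriv (L^4) = 4 * L^3 * D"
    by (simp add: fps_deriv_power D_def)
  have e3: "fps_deriv (L^2) = 2 * L * D"
    by (simp add: fps_deriv_power D_def)
  have e4: "fps_deriv L = D"
    by (simp add: D_def)
  have gen: "\<And>(h::complex fps) A T C. h*2 = 1 \<Longrightarrow> h*(2*(A*(fps_X*D))*(A*M') - (4*L^3*D + T*(2*L*D) + (2*C)*D))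
      = D*(A*A*(fps_X*M') - (2*L^3+T*L + C))"
  proof -
    fix h A T C :: "complex fps" assume "h*2 = 1"
    then show "h*(2*(A*(fps_X*D))*(A*M') - (4*L^3*D + T*(2*L*D) + (2*C)*D))
      = D*(A*A*(fps_X*M') - (2*L^3+T*L + C))" by algebra
  qed
  have c1: "fps_const (1/2) * (2::complex fps) = 1"
    by (simp add: fps_numeral_fps_const flip: fps_const_mult)
  have c2: "fps_const (a^2) = fps_const a * fps_const a"
    by (simp add: power2_eq_square)
  have c3: "fps_const (2*c) = 2 * fps_const c"
    by (simp add: fps_numeral_fps_const flip: fps_const_mult)
  have "fps_deriv (fps_const (1/2) * ((fps_const a * M)^2
      - (L^4 + fps_const t * L^2 + fps_const (2*c) * L)))
    = fps_const (1/2) * (2 * (fps_const a * M) * (fps_const a * M') - (4 * L^3 * D + fps_const t * (2 * L * D) + fps_const (2*c) * D))"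
    by (simp only: fps_deriv_mult_const_left fps_deriv_sub fps_deriv_add e1 e2 e3 e4)
  also have "\<dots> = D * (fps_const (a^2) * (fps_X * M') - (2 * L^3 + fps_const t * L + fps_const c))"
    unfolding M_def c2 c3 using c1 gen by blast
  also have "\<dots> = 0" using ode by (simp add: M'_def M_def D_def)
  finally show ?thesis by (simp add: M_def D_def)
qed

lemma sq_const:
  fixes s :: "complex fps"
  assumes "\<forall>k\<ge>1. fps_nth (s^2) k = 0" and "fps_nth s 0 \<noteq> 0"
  shows "\<forall>k\<ge>1. fps_nth s k = 0"
proof -
  define C where "C = fps_const (fps_nth s 0)"
  have C2: "C^2 = fps_const (fps_nth s 0 ^ 2)" unfolding C_def
    by (simp only: fps_const_power)
  have "s^2 = C^2"
  proof (rule fps_ext)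
    fix n show "fps_nth (s^2) n = fps_nth (C^2) n"
    proof (cases "n = 0")
      case True thus ?thesis unfolding C2 by (simp add: power2_eq_square fps_mult_nth_0)
    next
      case False thus ?thesis unfolding C2 using assms(1) by simp
    qed
  qed
  hence "(s - C) * (s + C) = 0" by (simp add: power2_eq_square algebra_simps)
  moreover have "s + C \<noteq> 0"
  proof
    assume "s + C = 0"
    hence "fps_nth (s + C) 0 = 0" by simp
    thus False using assms(2) by (simp add: C_def)
  qed
  ultimately have "s - C = 0" using mult_eq_0_iff by blast
  hence sC: "s = C" by simp
  show ?thesis
  proof (intro allI impI)
    fix k :: nat assume k: "k \<ge> 1"
    have "fps_nth s k = fps_nth C k" using sC by (rule arg_cong)
    also have "\<dots> = 0" using k unfolding C_def by simp
    finally show "fps_nth s k = 0" .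
  qed
qed

lemma PK_vanish:
  assumes sol: "one_param_solution c lam0 phi U lam" and tU: "t \<in> U"
  shows "\<forall>k\<ge>1. fps_nth (P (KS c phi lam t)) k = 0"
proof -
  define L where "L = Abs_fps (\<lambda>k. lam k 0 t)"
  define a where "a = deriv phi t"
  have PL: "P (LamS lam t) = L" by (simp add: LamS_def P_bser L_def)
  have PN: "P (NuS phi lam t) = fps_const a * (fps_X * fps_deriv L)"
    by (rule fps_ext) (auto simp: NuS_def P_bser L_def edt_def a_def)
  have ode: "fps_const (a^2) * (fps_X * fps_deriv (fps_X * fps_deriv L))
     = 2 * L^3 + fps_const t * L + fps_const c"
  proof (rule fps_ext)
    fix n
    have "edt phi (edt phi lam) n 0 t
         = bcoef (2 * (LamS lam t)^3 + bconst t * LamS lam t + bconst c) n 0"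
      using sol tU unfolding one_param_solution_def by blast
    also have "\<dots> = fps_nth (P (2 * (LamS lam t)^3 + bconst t * LamS lam t + bconst c)) n"
      by (simp add: P_nth)
    also have "\<dots> = fps_nth (2 * L^3 + fps_const t * L + fps_const c) n"
      by (simp add: P_add P_mult P_pow P_two P_bconst PL)
    finally show "fps_nth (fps_const (a^2) * (fps_X * fps_deriv (fps_X * fps_deriv L))) n
        = fps_nth (2 * L^3 + fps_const t * L + fps_const c) n"
      by (cases n) (auto simp: edt_def a_def L_def power2_eq_square algebra_simps)
  qed
  have PK: "P (KS c phi lam t) = fps_const (1/2) * ((fps_const a * (fps_X * fps_deriv L))^2
      - (L^4 + fps_const t * L^2 + fps_const (2*c) * L))"
    by (simp add: KS_def P_add P_mult P_pow P_diff P_bconst PL PN)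
  have "fps_deriv (P (KS c phi lam t)) = 0" unfolding PK by (rule K_const[OF ode])
  hence PKc: "P (KS c phi lam t) = fps_const (fps_nth (P (KS c phi lam t)) 0)"
    using fps_deriv_eq_0_iff by blast
  show ?thesis
  proof (intro allI impI)
    fix k :: nat assume k: "k \<ge> 1"
    have "fps_nth (P (KS c phi lam t)) k = fps_nth (fps_const (fps_nth (P (KS c phi lam t)) 0)) k"
      using PKc by (rule arg_cong)
    also have "\<dots> = 0" using k by simp
    finally show "fps_nth (P (KS c phi lam t)) k = 0" .
  qed
qed

lemma PQ_vanish:
  assumes sol: "one_param_solution c lam0 phi U lam" and tU: "t \<in> U" and k: "k \<ge> 1"
  shows "bcoef (QS c phi lam x t) k 0 = 0"
proof -
  have "P (QS c phi lam x t) = fps_const (x^4 + t*x^2 + 2*c*x) + 2 * P (KS c phi lam t)"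
    by (simp add: QS_def P_add P_diff P_mult P_pow P_etainv P_bconst P_two)
  hence "bcoef (QS c phi lam x t) k 0 = fps_nth (2 * P (KS c phi lam t)) k"
    using k by (simp add: P_nth[symmetric])
  also have "\<dots> = 0" using PK_vanish[OF sol tU] k
    by (simp add: fps_numeral_fps_const)
  finally show ?thesis .
qed

lemma ric_vanish:
  assumes sol: "one_param_solution c lam0 phi U lam" and tU: "t \<in> U"
    and ric: "riccati_sol c phi lam U X S" and xX: "x \<in> X t"
    and nz: "S 0 0 x t \<noteq> 0"
  shows "\<forall>k\<ge>1. S k 0 x t = 0"
proof -
  define s where "s = Abs_fps (\<lambda>k. S k 0 x t)"
  have "\<forall>k\<ge>1. fps_nth (s^2) k = 0"
  proof (intro allI impI)
    fix k :: nat assume k: "k \<ge> 1"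
    have "bcoef (bser (\<lambda>i j. S i j x t) * bser (\<lambda>i j. S i j x t)) k 0
        = bcoef (QS c phi lam x t) k 0"
    proof -
      have "\<forall>t\<in>U. \<forall>x\<in>X t. \<forall>k m.
        bcoef (bser (\<lambda>i j. S i j x t) * bser (\<lambda>i j. S i j x t)) k m
        + (if m = 0 then 0 else deriv (\<lambda>y. S k (m - 1) y t) x)
        = bcoef (QS c phi lam x t) k m" using ric unfolding riccati_sol_def by (rule conjunct2)
      hence "bcoef (bser (\<lambda>i j. S i j x t) * bser (\<lambda>i j. S i j x t)) k 0
        + (if (0::nat) = 0 then 0 else deriv (\<lambda>y. S k (0 - 1) y t) x)
        = bcoef (QS c phi lam x t) k 0" using tU xX by blast
      thus ?thesis by simp
    qed
    also have "\<dots> = 0" by (rule PQ_vanish[OF sol tU k])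
    moreover have "bcoef (bser (\<lambda>i j. S i j x t) * bser (\<lambda>i j. S i j x t)) k 0 = fps_nth (s^2) k"
      unfolding P_nth[symmetric] P_mult P_bser s_def power2_eq_square ..
    ultimately show "fps_nth (s^2) k = 0" by simp
  qed
  moreover have "fps_nth s 0 \<noteq> 0" using nz by (simp add: s_def)
  ultimately have "\<forall>k\<ge>1. fps_nth s k = 0" by (rule sq_const)
  thus ?thesis unfolding s_def by simp
qed


theorem mainTheorem9:
  fixes c :: complex
    and lam0 phi :: "complex \<Rightarrow> complex"
    and U :: "complex set"
    and X :: "complex \<Rightarrow> complex set"
    and lam :: "nat \<Rightarrow> nat \<Rightarrow> complex \<Rightarrow> complex"
    and S Sd :: "nat \<Rightarrow> nat \<Rightarrow> complex \<Rightarrow> complex \<Rightarrow> complex"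
  assumes "c \<noteq> 0"
    and "open U"
    and "lam0 holomorphic_on U"
    and "\<forall>t\<in>U. 2 * (lam0 t)^3 + t * lam0 t + c = 0"
    and "phi holomorphic_on U"
    and "\<forall>t\<in>U. (deriv phi t)^2 = 6 * (lam0 t)^2 + t"
    and "one_param_solution c lam0 phi U lam"
    and "\<forall>t\<in>U. open (X t)"
    and "riccati_sol c phi lam U X S"
    and "riccati_sol c phi lam U X Sd"
    and "\<forall>t\<in>U. \<forall>x\<in>X t. S 0 0 x t \<noteq> 0 \<and> Sd 0 0 x t = - S 0 0 x t"
  shows "\<forall>t\<in>U. \<forall>x\<in>X t. \<forall>k\<ge>1.
           S k 0 x t = 0 \<and> Sd k 0 x t = 0 \<and> (S k 0 x t - Sd k 0 x t) / 2 = 0"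
  proof (intro ballI allI impI)
  fix t x k assume tU: "t \<in> U" and xX: "x \<in> X t" and k: "(k::nat) \<ge> 1"
  have h: "S 0 0 x t \<noteq> 0" "Sd 0 0 x t = - S 0 0 x t" using assms(11) tU xX by auto
  have "S k 0 x t = 0" using ric_vanish[OF assms(7) tU assms(9) xX h(1)] k by blast
  moreover have "Sd k 0 x t = 0" using ric_vanish[OF assms(7) tU assms(10) xX] h k by auto
  ultimately show "S k 0 x t = 0 \<and> Sd k 0 x t = 0 \<and> (S k 0 x t - Sd k 0 x t) / 2 = 0" by simp
qed

end
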